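(* Let $\mathcal I,\mathcal J,\mathcal K$ be ideals on $\omega$ and let $X$ be a nonempty topological space. (1) Each of the following implies the next: (a) $|X|<\mathfrak b_s(\mathcal J,\mathcal J,\mathcal I)$; (b) for every sequence $(f_n)$ in $\mathcal C(X)$, $\mathcal I$-pointwise convergence to $0$ implies $\mathcal J$-quasi-normal convergence to $0$; (c) $\mathcal I\subseteq\mathcal J$. (2) Each of the following implies the next: (a) $|X|<\mathrm{add}_\omega(\mathcal J,\mathcal K)$; (b) for every $(f_n)$ in $\mathcal C(X)$, $\mathcal J$-quasi-normal convergence to $0$ implies $\mathcal K$-$\sigma$-uniform convergence to $0$; (c) $\mathcal J\subseteq\mathcal K$. (3) Each of the following implies the next: (a) $|X|<\mathfrak b_\sigma(\mathcal I,\mathcal K)$; (b) for every $(f_n)$ in $\mathcal C(X)$, $\mathcal I$-pointwise convergence to $0$ implies $\mathcal K$-$\sigma$-uniform convergence to $0$; (c) $\mathcal I\subseteq\mathcal K$.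
   Context: An ideal on $\omega$ is a family $\mathcal I\subseteq\mathcal P(\omega)$ closed under finite unions and subsets, containing all finite sets, with $\omega\notin\mathcal I$. A real sequence $(a_n)$ is $\mathcal I$-convergent to $0$ if $\{n:|a_n|\ge\varepsilon\}\in\mathcal I$ for all $\varepsilon>0$. For a sequence $(f_n)$ of real functions on a set $X$: $\mathcal I$-pointwise convergence to $0$ means $(f_n(x))$ is $\mathcal I$-convergent to $0$ for each $x$; $\mathcal I$-uniform means $\{n:\exists x\in X\,(|f_n(x)|\ge\varepsilon)\}\in\mathcal I$ for each $\varepsilon>0$; $\mathcal I$-$\sigma$-uniform means $X=\bigcup_{k\in\omega}X_k$ with $(f_n\restriction X_k)$ $\mathcal I$-uniformly convergent to $0$ for each $k$; $\mathcal I$-quasi-normal means there is a sequence $(\varepsilon_n)$ of positive reals $\mathcal I$-convergent to $0$ with $\{n:|f_n(x)|\ge\varepsilon_n\}\in\mathcal I$ for each $x$. $\mathcal C(X)$ = continuous real functions on $X$. Cardinals (convention $\min\emptyset=\infty$, and $\kappa<\infty$ for every cardinal $\kappa$): $\widehat{\mathcal P}_{\mathcal I}$ = sequences $(A_n)\in\mathcal I^\omega$ of pairwise disjoint sets; $\mathcal P_{\mathcal I}$ = those with $\bigcup_nA_n=\omega$; $\mathcal M_{\mathcal I}$ = sequences $(E_k)\in\mathcal I^\omega$ with $E_k\subseteq E_{k+1}$. $\mathfrak b_s(\mathcal I,\mathcal J,\mathcal K)=\min\{|\mathcal E|:\mathcal E\subseteq\widehat{\mathcal P}_{\mathcal K}$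 and for every $(A_n)\in\mathcal P_{\mathcal J}$ there is $(E_n)\in\mathcal E$ with $\bigcup_n(A_{n+1}\cap\bigcup_{i\le n}E_i)\notin\mathcal I\}$; $\mathfrak b_\sigma(\mathcal I,\mathcal J)=\min\{|\mathcal E|:\mathcal E\subseteq\mathcal M_{\mathcal I}$ and for every $(A_n)\in\mathcal M_{\mathcal J}$ there is $(E_n)\in\mathcal E$ with $E_n\not\subseteq A_n$ for infinitely many $n\}$; $\mathrm{add}_\omega(\mathcal I,\mathcal J)=\min\{|\mathcal A|:\mathcal A\subseteq\mathcal I$ and for every $(B_n)\in\mathcal J^\omega$ there is $A\in\mathcal A$ with $A\not\subseteq B_n$ for all $n\}$. *)

theory Defs
  imports "HOL-Analysis.Analysis" "HOL-Library.Equipollence"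
begin

definition ideal :: "nat set set \<Rightarrow> bool" where
  "ideal I \<longleftrightarrow> (\<forall>A\<in>I. \<forall>B\<in>I. A \<union> B \<in> I) \<and> (\<forall>A\<in>I. \<forall>B. B \<subseteq> A \<longrightarrow> B \<in> I)
     \<and> (\<forall>A. finite A \<longrightarrow> A \<in> I) \<and> UNIV \<notin> I"

definition I_conv0 :: "nat set set \<Rightarrow> (nat \<Rightarrow> real) \<Rightarrow> bool" where
  "I_conv0 I a \<longleftrightarrow> (\<forall>\<epsilon>>0. {n. \<bar>a n\<bar> \<ge> \<epsilon>} \<in> I)"

definition I_pointwise0 :: "nat set set \<Rightarrow> 'a set \<Rightarrow> (nat \<Rightarrow> 'a \<Rightarrow> real) \<Rightarrow> bool" where
  "I_pointwise0 I S f \<longleftrightarrow> (\<forall>x\<in>S. I_conv0 I (\<lambda>n. f n x))"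

definition I_uniform0 :: "nat set set \<Rightarrow> 'a set \<Rightarrow> (nat \<Rightarrow> 'a \<Rightarrow> real) \<Rightarrow> bool" where
  "I_uniform0 I S f \<longleftrightarrow> (\<forall>\<epsilon>>0. {n. \<exists>x\<in>S. \<bar>f n x\<bar> \<ge> \<epsilon>} \<in> I)"

definition I_sigma_uniform0 :: "nat set set \<Rightarrow> 'a set \<Rightarrow> (nat \<Rightarrow> 'a \<Rightarrow> real) \<Rightarrow> bool" where
  "I_sigma_uniform0 I S f \<longleftrightarrow>
     (\<exists>Xs :: nat \<Rightarrow> 'a set. S = (\<Union>k. Xs k) \<and> (\<forall>k. I_uniform0 I (Xs k) f))"

definition I_quasi_normal0 :: "nat set set \<Rightarrow> 'a set \<Rightarrow> (nat \<Rightarrow> 'a \<Rightarrow> real) \<Rightarrow> bool" where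
  "I_quasi_normal0 I S f \<longleftrightarrow>
     (\<exists>eps :: nat \<Rightarrow> real. (\<forall>n. eps n > 0) \<and> I_conv0 I eps \<and>
        (\<forall>x\<in>S. {n. \<bar>f n x\<bar> \<ge> eps n} \<in> I))"

definition hatP :: "nat set set \<Rightarrow> (nat \<Rightarrow> nat set) set" where
  "hatP I = {A. (\<forall>n. A n \<in> I) \<and> (\<forall>n m. n \<noteq> m \<longrightarrow> A n \<inter> A m = {})}"

definition partP :: "nat set set \<Rightarrow> (nat \<Rightarrow> nat set) set" where
  "partP I = {A. A \<in> hatP I \<and> (\<Union>n. A n) = UNIV}"

definition monoM :: "nat set set \<Rightarrow> (nat \<Rightarrow> nat set) set" where
  "monoM I = {E. (\<forall>n. E n \<in> I) \<and> (\<forall>k. E k \<subseteq> E (Suc k))}"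

text \<open>The families over which the cardinal invariants are minima.\<close>
definition bs_families :: "nat set set \<Rightarrow> nat set set \<Rightarrow> nat set set \<Rightarrow> (nat \<Rightarrow> nat set) set set" where
  "bs_families I J K = {\<E>. \<E> \<subseteq> hatP K \<and>
     (\<forall>A\<in>partP J. \<exists>E\<in>\<E>. (\<Union>n. A (Suc n) \<inter> (\<Union>i\<le>n. E i)) \<notin> I)}"

definition bsigma_families :: "nat set set \<Rightarrow> nat set set \<Rightarrow> (nat \<Rightarrow> nat set) set set" where
  "bsigma_families I J = {\<E>. \<E> \<subseteq> monoM I \<and>
     (\<forall>A\<in>monoM J. \<exists>E\<in>\<E>. infinite {n. \<not> E n \<subseteq> A n})}"

definition addw_families :: "nat set set \<Rightarrow> nat set set \<Rightarrow> nat set set set" where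
  "addw_families I J = {\<A>. \<A> \<subseteq> I \<and>
     (\<forall>B :: nat \<Rightarrow> nat set. (\<forall>n. B n \<in> J) \<longrightarrow> (\<exists>A\<in>\<A>. \<forall>n. \<not> A \<subseteq> B n))}"

text \<open>|S| < min {|F| : F \<in> Fam} (with min of the empty set = infinity),
  i.e. |S| < |F| for every F \<in> Fam.\<close>
definition card_less_min :: "'a set \<Rightarrow> 'b set set \<Rightarrow> bool" where
  "card_less_min S Fam \<longleftrightarrow> (\<forall>F\<in>Fam. S \<prec> F)"

end

theory Submission
  imports Defs
begin

lemma ideal_sub: "ideal I \<Longrightarrow> A \<in> I \<Longrightarrow> B \<subseteq> A \<Longrightarrow> B \<in> I"
  unfolding ideal_def by blast

lemma ideal_Un: "ideal I \<Longrightarrow> A \<in> I \<Longrightarrow> B \<in> I \<Longrightarrow> A \<union> B \<in> I"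
  unfolding ideal_def by blast

lemma ideal_UNIV: "ideal I \<Longrightarrow> UNIV \<notin> I"
  unfolding ideal_def by blast

lemma ideal_fin: "ideal I \<Longrightarrow> finite A \<Longrightarrow> A \<in> I"
  unfolding ideal_def by blast

lemma ideal_UN_finite: "ideal I \<Longrightarrow> (\<And>n. n \<le> (N::nat) \<Longrightarrow> A n \<in> I) \<Longrightarrow> (\<Union>n\<le>N. A n) \<in> I"
proof (induction N)
  case 0 then show ?case by simp
next
  case (Suc N)
  have "(\<Union>n\<le>Suc N. A n) = (\<Union>n\<le>N. A n) \<union> A (Suc N)"
    by (auto simp: atMost_Suc)
  then show ?case using Suc ideal_Un by simp
qed

lemma card_less_min_not:
  assumes "card_less_min S Fam" 
  shows "g ` S \<notin> Fam"
proof
  assume "g ` S \<in> Fam"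
  then have "S \<prec> g ` S" using assms unfolding card_less_min_def by blast
  moreover have "g ` S \<lesssim> S" by (rule image_lepoll)
  ultimately show False by (meson lepoll_antisym lesspoll_def)
qed

lemma part1a:
  assumes I: "ideal I" and J: "ideal J" and card: "card_less_min S (bs_families J J I)"
    and pw: "I_pointwise0 I S f"
  shows "I_quasi_normal0 J S f"
proof -
  define G where "G x i = {m. \<bar>f m x\<bar> \<ge> 1/(real i+2)}" for x i
  define E where "E x = disjointed (G x)" for x
  have GI: "G x i \<in> I" if "x \<in> S" for x i
  proof -
    have "1/(real i+2) > 0" by simp
    then show ?thesis using pw that unfolding I_pointwise0_def I_conv0_def G_def by blast
  qed
  have Gmono: "G x i \<subseteq> G x j" if "i \<le> j" for x i j
  proof
    fix m assume "m \<in> G x i"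
    then have "\<bar>f m x\<bar> \<ge> 1/(real i+2)" by (simp add: G_def)
    moreover have "1/(real i+2) \<ge> 1/(real j+2)" using that
      by (simp add: frac_le)
    ultimately show "m \<in> G x j" by (simp add: G_def)
  qed
  have Ehat: "E x \<in> hatP I" if "x \<in> S" for x
    unfolding hatP_def
  proof (intro CollectI conjI allI impI)
    fix n show "E x n \<in> I" using ideal_sub[OF I GI[OF that, of n]] disjointed_subset
      by (metis E_def)
  next
    fix n m :: nat assume "n \<noteq> m"
    then show "E x n \<inter> E x m = {}" using disjoint_family_disjointed[of "G x"]
      unfolding E_def disjoint_family_on_def by blast
  qed
  have EU: "(\<Union>i\<le>n. E x i) = G x n" for x n
  proof -
    have "(\<Union>i\<le>n. E x i) = (\<Union>i\<in>{0..<Suc n}. E x i)"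
      by (metis atLeast0LessThan lessThan_Suc_atMost)
    also have "\<dots> = (\<Union>i\<in>{0..<Suc n}. G x i)" unfolding E_def by (rule finite_UN_disjointed_eq)
    also have "\<dots> = G x n"
    proof
      show "(\<Union>i\<in>{0..<Suc n}. G x i) \<subseteq> G x n"
        using Gmono by (meson UN_least atLeastLessThan_iff less_Suc_eq_le)
      show "G x n \<subseteq> (\<Union>i\<in>{0..<Suc n}. G x i)" by auto
    qed
    finally show ?thesis .
  qed
  have "E ` S \<notin> bs_families J J I" by (rule card_less_min_not[OF card])
  moreover have "E ` S \<subseteq> hatP I" using Ehat by blast
  ultimately obtain A where A: "A \<in> partP J"
     and AE: "\<forall>x\<in>S. (\<Union>n. A (Suc n) \<inter> (\<Union>i\<le>n. E x i)) \<in> J"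
    unfolding bs_families_def by blast
  have AJ: "A n \<in> J" for n using A unfolding partP_def hatP_def by blast
  have Adisj: "n \<noteq> m \<Longrightarrow> A n \<inter> A m = {}" for n m using A unfolding partP_def hatP_def by blast
  have Acov: "\<exists>n. m \<in> A n" for m using A unfolding partP_def by blast
  define idx where "idx m = (SOME n. m \<in> A n)" for m
  have idx: "m \<in> A (idx m)" for m unfolding idx_def by (rule someI_ex[OF Acov])
  have idx_u: "m \<in> A n \<Longrightarrow> idx m = n" for m n using idx Adisj by blast
  define eps where "eps m = 1/(real (idx m)+1)" for m
  show ?thesis unfolding I_quasi_normal0_def
  proof (intro exI[of _ eps] conjI allI ballI)
    fix n show "eps n > 0" by (simp add: eps_def)
  next
    show "I_conv0 J eps" unfolding I_conv0_def
    proof (intro allI impI)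
      fix e :: real assume e: "e > 0"
      have "{n. \<bar>eps n\<bar> \<ge> e} \<subseteq> (\<Union>k\<le>nat \<lceil>1/e\<rceil>. A k)"
      proof
        fix m assume "m \<in> {n. \<bar>eps n\<bar> \<ge> e}"
        then have "1/(real (idx m)+1) \<ge> e" by (simp add: eps_def)
        then have "e * (real (idx m)+1) \<le> 1" by (simp add: le_divide_eq)
        then have "real (idx m) + 1 \<le> 1/e" using e by (simp add: le_divide_eq mult.commute)
        moreover have "1/e \<le> real (nat \<lceil>1/e\<rceil>)" by (rule real_nat_ceiling_ge)
        ultimately have "real (idx m) \<le> real (nat \<lceil>1/e\<rceil>)" by linarith
        then have "idx m \<le> nat \<lceil>1/e\<rceil>" by (simp only: of_nat_le_iff)
        then show "m \<in> (\<Union>k\<le>nat \<lceil>1/e\<rceil>. A k)" using idx[of m] by (intro UN_I[of "idx m"]) auto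
      qed
      moreover have "(\<Union>k\<le>nat \<lceil>1/e\<rceil>. A k) \<in> J" by (rule ideal_UN_finite[OF J AJ])
      ultimately show "{n. \<bar>eps n\<bar> \<ge> e} \<in> J"
        using ideal_sub[OF J] by blast
    qed
  next
    fix x assume x: "x \<in> S"
    have "{n. \<bar>f n x\<bar> \<ge> eps n} \<subseteq> A 0 \<union> (\<Union>n. A (Suc n) \<inter> (\<Union>i\<le>n. E x i))"
    proof
      fix m assume m: "m \<in> {n. \<bar>f n x\<bar> \<ge> eps n}"
      show "m \<in> A 0 \<union> (\<Union>n. A (Suc n) \<inter> (\<Union>i\<le>n. E x i))"
      proof (cases "idx m")
        case 0 then show ?thesis using idx[of m] by simp
      next
        case (Suc k)
        have "real (Suc k) + 1 = real k + 2" by simp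
        then have "eps m = 1/(real k + 2)" using Suc by (simp add: eps_def)
        then have "m \<in> G x k" using m by (simp add: G_def)
        then have "m \<in> A (Suc k) \<inter> (\<Union>i\<le>k. E x i)" using idx[of m] Suc EU[of x k] by simp
        then show ?thesis by (intro UnI2 UN_I[of k]) auto
      qed
    qed
    moreover have "A 0 \<union> (\<Union>n. A (Suc n) \<inter> (\<Union>i\<le>n. E x i)) \<in> J"
      by (rule ideal_Un[OF J AJ AE[rule_format, OF x]])
    ultimately show "{n. \<bar>f n x\<bar> \<ge> eps n} \<in> J"
      using ideal_sub[OF J] by blast
  qed
qed

lemma part2a:
  assumes J: "ideal J" and K: "ideal K" and ne: "S \<noteq> {}"
    and card: "card_less_min S (addw_families J K)" and qn: "I_quasi_normal0 J S f"
  shows "I_sigma_uniform0 K S f"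
proof -
  have JK: "J \<subseteq> K"
  proof
    fix A assume A: "A \<in> J"
    show "A \<in> K"
    proof (rule ccontr)
      assume nA: "A \<notin> K"
      have "(\<lambda>_. A) ` S \<notin> addw_families J K" by (rule card_less_min_not[OF card])
      moreover have "(\<lambda>_. A) ` S = {A}" using ne by auto
      moreover have "{A} \<in> addw_families J K" unfolding addw_families_def
      proof (intro CollectI conjI allI impI)
        show "{A} \<subseteq> J" using A by simp
        fix B :: "nat \<Rightarrow> nat set" assume B: "\<forall>n. B n \<in> K"
        have "\<forall>n. \<not> A \<subseteq> B n"
        proof
          fix n show "\<not> A \<subseteq> B n" using ideal_sub[OF K, of "B n" A] B nA by blast
        qed
        then show "\<exists>A'\<in>{A}. \<forall>n. \<not> A' \<subseteq> B n" by simp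
      qed
      ultimately show False by simp
    qed
  qed
  obtain eps where eps: "\<forall>n. eps n > 0" "I_conv0 J eps" "\<forall>x\<in>S. {n. \<bar>f n x\<bar> \<ge> eps n} \<in> J"
    using qn unfolding I_quasi_normal0_def by blast
  define B where "B x = {n. \<bar>f n x\<bar> \<ge> eps n}" for x
  have "B ` S \<notin> addw_families J K" by (rule card_less_min_not[OF card])
  moreover have "B ` S \<subseteq> J" using eps(3) B_def by auto
  ultimately have "\<exists>C :: nat \<Rightarrow> nat set. (\<forall>n. C n \<in> K) \<and> \<not> (\<exists>A\<in>B ` S. \<forall>n. \<not> A \<subseteq> C n)"
    unfolding addw_families_def by simp
  then obtain C :: "nat \<Rightarrow> nat set" where C: "\<forall>n. C n \<in> K" "\<forall>x\<in>S. \<exists>n. B x \<subseteq> C n"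
    by auto
  define Xs where "Xs k = {x\<in>S. B x \<subseteq> C k}" for k
  show ?thesis unfolding I_sigma_uniform0_def
  proof (intro exI[of _ Xs] conjI allI)
    show "S = (\<Union>k. Xs k)" using C(2) unfolding Xs_def by blast
  next
    fix k show "I_uniform0 K (Xs k) f" unfolding I_uniform0_def
    proof (intro allI impI)
      fix e :: real assume e: "e > 0"
      have "{n. \<exists>x\<in>Xs k. \<bar>f n x\<bar> \<ge> e} \<subseteq> C k \<union> {n. \<bar>eps n\<bar> \<ge> e}"
      proof
        fix n assume "n \<in> {n. \<exists>x\<in>Xs k. \<bar>f n x\<bar> \<ge> e}"
        then obtain x where x: "x \<in> Xs k" "\<bar>f n x\<bar> \<ge> e" by blast
        show "n \<in> C k \<union> {n. \<bar>eps n\<bar> \<ge> e}"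
        proof (cases "n \<in> C k")
          case False
          then have "n \<notin> B x" using x(1) Xs_def by blast
          then have "\<bar>f n x\<bar> < eps n" by (simp add: B_def)
          then show ?thesis using x(2) by auto
        qed simp
      qed
      moreover have "{n. \<bar>eps n\<bar> \<ge> e} \<in> K" using JK eps(2) e unfolding I_conv0_def by blast
      then have "C k \<union> {n. \<bar>eps n\<bar> \<ge> e} \<in> K" using ideal_Un[OF K] C(1) by blast
      ultimately show "{n. \<exists>x\<in>Xs k. \<bar>f n x\<bar> \<ge> e} \<in> K" using ideal_sub[OF K] by blast
    qed
  qed
qed

lemma part3a:
  assumes I: "ideal I" and K: "ideal K"
    and card: "card_less_min S (bsigma_families I K)" and pw: "I_pointwise0 I S f"
  shows "I_sigma_uniform0 K S f"
proof -
  define E where "E x k = {n. \<bar>f n x\<bar> \<ge> 1/(real k+1)}" for x k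
  have EM: "E x \<in> monoM I" if x: "x \<in> S" for x
    unfolding monoM_def
  proof (intro CollectI conjI allI)
    fix n
    have "1/(real n+1) > 0" by simp
    then show "E x n \<in> I" using pw x unfolding I_pointwise0_def I_conv0_def E_def by blast
  next
    fix k
    have "1/(real (Suc k)+1) \<le> 1/(real k+1)" by (simp add: frac_le)
    then show "E x k \<subseteq> E x (Suc k)" unfolding E_def by auto
  qed
  have "E ` S \<notin> bsigma_families I K" by (rule card_less_min_not[OF card])
  moreover have "E ` S \<subseteq> monoM I" using EM by blast
  ultimately obtain A where A: "A \<in> monoM K" "\<forall>x\<in>S. finite {k. \<not> E x k \<subseteq> A k}"
    unfolding bsigma_families_def by blast
  have AK: "A j \<in> K" for j using A(1) unfolding monoM_def by blast
  define Xs where "Xs k = {x\<in>S. \<forall>j\<ge>k. E x j \<subseteq> A j}" for k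
  show ?thesis unfolding I_sigma_uniform0_def
  proof (intro exI[of _ Xs] conjI allI)
    show "S = (\<Union>k. Xs k)"
    proof
      show "S \<subseteq> (\<Union>k. Xs k)"
      proof
        fix x assume x: "x \<in> S"
        obtain k where k: "{j. \<not> E x j \<subseteq> A j} \<subseteq> {..<k}"
          using finite_nat_bounded A(2) x by blast
        have "\<forall>j\<ge>k. E x j \<subseteq> A j"
        proof (intro allI impI)
          fix j assume j: "j \<ge> k"
          show "E x j \<subseteq> A j"
          proof (rule ccontr)
            assume "\<not> E x j \<subseteq> A j"
            then have "j \<in> {..<k}" using k by blast
            then show False using j by simp
          qed
        qed
        then have "x \<in> Xs k" unfolding Xs_def using x by blast
        then show "x \<in> (\<Union>k. Xs k)" by blast
      qed
    qed (auto simp: Xs_def)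
  next
    fix k show "I_uniform0 K (Xs k) f" unfolding I_uniform0_def
    proof (intro allI impI)
      fix e :: real assume e: "e > 0"
      define j where "j = max k (nat \<lceil>1/e\<rceil>)"
      have "1/e \<le> real (nat \<lceil>1/e\<rceil>)" by (rule real_nat_ceiling_ge)
      moreover have "real (nat \<lceil>1/e\<rceil>) \<le> real j" unfolding j_def by simp
      ultimately have "1/e \<le> real j + 1" by linarith
      then have ej: "1/(real j + 1) \<le> e" using e
      proof -
        have "1 \<le> (real j + 1) * e" using \<open>1/e \<le> real j + 1\<close> e by (simp add: divide_le_eq)
        then show ?thesis by (simp add: divide_le_eq mult.commute)
      qed
      have "{n. \<exists>x\<in>Xs k. \<bar>f n x\<bar> \<ge> e} \<subseteq> A j"
      proof
        fix n assume "n \<in> {n. \<exists>x\<in>Xs k. \<bar>f n x\<bar> \<ge> e}"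
        then obtain x where x: "x \<in> Xs k" "\<bar>f n x\<bar> \<ge> e" by blast
        have "n \<in> E x j" unfolding E_def using x(2) ej by simp
        moreover have "E x j \<subseteq> A j" using x(1) unfolding Xs_def j_def by simp
        ultimately show "n \<in> A j" by blast
      qed
      then show "{n. \<exists>x\<in>Xs k. \<bar>f n x\<bar> \<ge> e} \<in> K" using ideal_sub[OF K AK] by blast
    qed
  qed
qed

lemma sigma_ind:
  assumes K: "ideal K" and ne: "S \<noteq> {}"
    and su: "I_sigma_uniform0 K S (\<lambda>n x. if n \<in> A then 1::real else 0)"
  shows "A \<in> K"
proof -
  obtain Xs :: "nat \<Rightarrow> _" where Xs: "S = (\<Union>k. Xs k)" "\<forall>k. I_uniform0 K (Xs k) (\<lambda>n x. if n \<in> A then 1::real else 0)"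
    using su unfolding I_sigma_uniform0_def by blast
  obtain x where "x \<in> S" using ne by blast
  then obtain k where k: "x \<in> Xs k" using Xs(1) by blast
  have "{n. \<exists>x\<in>Xs k. \<bar>(if n \<in> A then 1::real else 0)\<bar> \<ge> 1} \<in> K"
    using Xs(2) unfolding I_uniform0_def by simp
  moreover have "A \<subseteq> {n. \<exists>x\<in>Xs k. \<bar>(if n \<in> A then 1::real else 0)\<bar> \<ge> 1}" using k by auto
  ultimately show ?thesis using ideal_sub[OF K] by blast
qed

lemma pw_ind:
  assumes I: "ideal I" and A: "A \<in> I"
  shows "I_pointwise0 I S (\<lambda>n x. if n \<in> A then 1::real else 0)"
  unfolding I_pointwise0_def I_conv0_def
proof (intro ballI allI impI)
  fix x and e :: real assume e: "e > 0"
  have "{n. \<bar>(if n \<in> A then 1::real else 0)\<bar> \<ge> e} \<subseteq> A" using e by auto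
  then show "{n. \<bar>(\<lambda>n. if n \<in> A then 1::real else 0) n\<bar> \<ge> e} \<in> I" using ideal_sub[OF I A] by simp
qed

lemma cont_ind: "\<forall>n. continuous_map X euclideanreal (\<lambda>x. if n \<in> A then 1::real else 0)"
  by simp

lemma part1c:
  assumes I: "ideal I" and J: "ideal J" and ne: "topspace X \<noteq> {}"
    and H: "\<forall>f :: nat \<Rightarrow> 'a \<Rightarrow> real. (\<forall>n. continuous_map X euclideanreal (f n)) \<longrightarrow>
          I_pointwise0 I (topspace X) f \<longrightarrow> I_quasi_normal0 J (topspace X) f"
  shows "I \<subseteq> J"
proof
  fix A assume A: "A \<in> I"
  have "I_quasi_normal0 J (topspace X) (\<lambda>n x. if n \<in> A then 1::real else 0)"
    using H[THEN spec[where x="\<lambda>n x. if n \<in> A then 1::real else 0"]] pw_ind[OF I A, of "topspace X"] by simp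
  then obtain eps where eps: "I_conv0 J eps"
    "\<forall>x\<in>topspace X. {n. \<bar>(if n \<in> A then 1::real else 0)\<bar> \<ge> eps n} \<in> J"
    unfolding I_quasi_normal0_def by blast
  obtain x where "x \<in> topspace X" using ne by blast
  then have B1: "{n. \<bar>(if n \<in> A then 1::real else 0)\<bar> \<ge> eps n} \<in> J" using eps(2) by blast
  have B2: "{n. \<bar>eps n\<bar> \<ge> 1} \<in> J" using eps(1) unfolding I_conv0_def by simp
  have "A \<subseteq> {n. \<bar>(if n \<in> A then 1::real else 0)\<bar> \<ge> eps n} \<union> {n. \<bar>eps n\<bar> \<ge> 1}" by auto
  then show "A \<in> J" using ideal_sub[OF J ideal_Un[OF J B1 B2]] by blast
qed

lemma part2c:
  assumes J: "ideal J" and K: "ideal K" and ne: "topspace X \<noteq> {}"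
    and H: "\<forall>f :: nat \<Rightarrow> 'a \<Rightarrow> real. (\<forall>n. continuous_map X euclideanreal (f n)) \<longrightarrow>
          I_quasi_normal0 J (topspace X) f \<longrightarrow> I_sigma_uniform0 K (topspace X) f"
  shows "J \<subseteq> K"
proof
  fix A assume A: "A \<in> J"
  define eps :: "nat \<Rightarrow> real" where "eps n = 1/(real n+1)" for n
  have "I_quasi_normal0 J (topspace X) (\<lambda>n x. if n \<in> A then 1::real else 0)"
    unfolding I_quasi_normal0_def
  proof (intro exI[of _ eps] conjI allI ballI)
    fix n show "eps n > 0" by (simp add: eps_def)
  next
    show "I_conv0 J eps" unfolding I_conv0_def
    proof (intro allI impI)
      fix e :: real assume e: "e > 0"
      have "{n. \<bar>eps n\<bar> \<ge> e} \<subseteq> {..nat \<lceil>1/e\<rceil>}"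
      proof
        fix m assume "m \<in> {n. \<bar>eps n\<bar> \<ge> e}"
        then have "1/(real m+1) \<ge> e" by (simp add: eps_def)
        then have "e * (real m+1) \<le> 1" by (simp add: le_divide_eq)
        then have "real m + 1 \<le> 1/e" using e by (simp add: le_divide_eq mult.commute)
        moreover have "1/e \<le> real (nat \<lceil>1/e\<rceil>)" by (rule real_nat_ceiling_ge)
        ultimately have "real m \<le> real (nat \<lceil>1/e\<rceil>)" by linarith
        then show "m \<in> {..nat \<lceil>1/e\<rceil>}" by (simp only: of_nat_le_iff atMost_iff)
      qed
      then show "{n. \<bar>eps n\<bar> \<ge> e} \<in> J" using ideal_sub[OF J ideal_fin[OF J]] by blast
    qed
  next
    fix x
    have "{n. \<bar>(if n \<in> A then 1::real else 0)\<bar> \<ge> eps n} \<subseteq> A" by (auto simp: eps_def)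
    then show "{n. \<bar>(if n \<in> A then 1::real else 0)\<bar> \<ge> eps n} \<in> J" using ideal_sub[OF J A] by blast
  qed
  then have "I_sigma_uniform0 K (topspace X) (\<lambda>n x. if n \<in> A then 1::real else 0)"
    using H[THEN spec[where x="\<lambda>n x. if n \<in> A then 1::real else 0"]] by simp
  then show "A \<in> K" by (rule sigma_ind[OF K ne])
qed

lemma part3c:
  assumes I: "ideal I" and K: "ideal K" and ne: "topspace X \<noteq> {}"
    and H: "\<forall>f :: nat \<Rightarrow> 'a \<Rightarrow> real. (\<forall>n. continuous_map X euclideanreal (f n)) \<longrightarrow>
          I_pointwise0 I (topspace X) f \<longrightarrow> I_sigma_uniform0 K (topspace X) f"
  shows "I \<subseteq> K"
proof
  fix A assume A: "A \<in> I"
  have "I_sigma_uniform0 K (topspace X) (\<lambda>n x. if n \<in> A then 1::real else 0)"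
    using H[THEN spec[where x="\<lambda>n x. if n \<in> A then 1::real else 0"]] pw_ind[OF I A, of "topspace X"] by simp
  then show "A \<in> K" by (rule sigma_ind[OF K ne])
qed

theorem theorem4p3:
  fixes I J K :: "nat set set" and X :: "'a topology"
  assumes "ideal I" and "ideal J" and "ideal K" and "topspace X \<noteq> {}"
  shows
   "(card_less_min (topspace X) (bs_families J J I) \<longrightarrow>
       (\<forall>f :: nat \<Rightarrow> 'a \<Rightarrow> real. (\<forall>n. continuous_map X euclideanreal (f n)) \<longrightarrow>
          I_pointwise0 I (topspace X) f \<longrightarrow> I_quasi_normal0 J (topspace X) f))
    \<and> ((\<forall>f :: nat \<Rightarrow> 'a \<Rightarrow> real. (\<forall>n. continuous_map X euclideanreal (f n)) \<longrightarrow>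
          I_pointwise0 I (topspace X) f \<longrightarrow> I_quasi_normal0 J (topspace X) f) \<longrightarrow> I \<subseteq> J)
    \<and> (card_less_min (topspace X) (addw_families J K) \<longrightarrow>
       (\<forall>f :: nat \<Rightarrow> 'a \<Rightarrow> real. (\<forall>n. continuous_map X euclideanreal (f n)) \<longrightarrow>
          I_quasi_normal0 J (topspace X) f \<longrightarrow> I_sigma_uniform0 K (topspace X) f))
    \<and> ((\<forall>f :: nat \<Rightarrow> 'a \<Rightarrow> real. (\<forall>n. continuous_map X euclideanreal (f n)) \<longrightarrow>
          I_quasi_normal0 J (topspace X) f \<longrightarrow> I_sigma_uniform0 K (topspace X) f) \<longrightarrow> J \<subseteq> K)
    \<and> (card_less_min (topspace X) (bsigma_families I K) \<longrightarrow>
       (\<forall>f :: nat \<Rightarrow> 'a \<Rightarrow> real. (\<forall>n. continuous_map X euclideanreal (f n)) \<longrightarrow>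
          I_pointwise0 I (topspace X) f \<longrightarrow> I_sigma_uniform0 K (topspace X) f))
    \<and> ((\<forall>f :: nat \<Rightarrow> 'a \<Rightarrow> real. (\<forall>n. continuous_map X euclideanreal (f n)) \<longrightarrow>
          I_pointwise0 I (topspace X) f \<longrightarrow> I_sigma_uniform0 K (topspace X) f) \<longrightarrow> I \<subseteq> K)"
proof (intro conjI)
  show "card_less_min (topspace X) (bs_families J J I) \<longrightarrow>
       (\<forall>f :: nat \<Rightarrow> 'a \<Rightarrow> real. (\<forall>n. continuous_map X euclideanreal (f n)) \<longrightarrow>
          I_pointwise0 I (topspace X) f \<longrightarrow> I_quasi_normal0 J (topspace X) f)"
    by (intro impI allI) (rule part1a[OF assms(1,2)], assumption+)
  show "(\<forall>f :: nat \<Rightarrow> 'a \<Rightarrow> real. (\<forall>n. continuous_map X euclideanreal (f n)) \<longrightarrow>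
          I_pointwise0 I (topspace X) f \<longrightarrow> I_quasi_normal0 J (topspace X) f) \<longrightarrow> I \<subseteq> J"
    by (intro impI) (rule part1c[OF assms(1,2,4)], assumption)
  show "card_less_min (topspace X) (addw_families J K) \<longrightarrow>
       (\<forall>f :: nat \<Rightarrow> 'a \<Rightarrow> real. (\<forall>n. continuous_map X euclideanreal (f n)) \<longrightarrow>
          I_quasi_normal0 J (topspace X) f \<longrightarrow> I_sigma_uniform0 K (topspace X) f)"
    by (intro impI allI) (rule part2a[OF assms(2,3,4)], assumption+)
  show "(\<forall>f :: nat \<Rightarrow> 'a \<Rightarrow> real. (\<forall>n. continuous_map X euclideanreal (f n)) \<longrightarrow>
          I_quasi_normal0 J (topspace X) f \<longrightarrow> I_sigma_uniform0 K (topspace X) f) \<longrightarrow> J \<subseteq> K"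
    by (intro impI) (rule part2c[OF assms(2,3,4)], assumption)
  show "card_less_min (topspace X) (bsigma_families I K) \<longrightarrow>
       (\<forall>f :: nat \<Rightarrow> 'a \<Rightarrow> real. (\<forall>n. continuous_map X euclideanreal (f n)) \<longrightarrow>
          I_pointwise0 I (topspace X) f \<longrightarrow> I_sigma_uniform0 K (topspace X) f)"
    by (intro impI allI) (rule part3a[OF assms(1,3)], assumption+)
  show "(\<forall>f :: nat \<Rightarrow> 'a \<Rightarrow> real. (\<forall>n. continuous_map X euclideanreal (f n)) \<longrightarrow>
          I_pointwise0 I (topspace X) f \<longrightarrow> I_sigma_uniform0 K (topspace X) f) \<longrightarrow> I \<subseteq> K"
    by (intro impI) (rule part3c[OF assms(1,3,4)], assumption)
qed

end
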